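(* Let $\mathcal N$ be a finite $k$-bounded Petri net ($k\ge1$) and $(\mathcal N^U,\lambda)$ an initial branching process of $\mathcal N$. Then every cut of $\mathcal N^U$ is finite.
   Context: A Petri net $(\mathcal P,\mathcal T,\mathcal F,\mathit{In})$ has disjoint places $\mathcal P$ and transitions $\mathcal T$, a flow relation $\mathcal F$ that is a multiset over $(\mathcal P\times\mathcal T)\cup(\mathcal T\times\mathcal P)$, and a finite multiset $\mathit{In}$ over $\mathcal P$; ${}^\bullet x(y)=\mathcal F(y,x)$, $x^\bullet(y)=\mathcal F(x,y)$, and every transition has finite nonempty pre- and postcondition. A marking is a finite multiset of places; $t$ is enabled in $M$ if ${}^\bullet t\subseteq M$, firing gives $M-{}^\bullet t+t^\bullet$; reachable markings are those obtained from $\mathit{In}$ by finitely many firings. The net is finite if it has finitely many places and transitions, and $k$-bounded if $M(p)\le k$ for every reachable marking $M$ and place $p$. For a map $f$ and a multiset $M$, $f[M](y)=\sum_{x:f(x)=y}M(x)$. Let $<$ be the transitive closure of $\{(x,y)\mid\mathcal F(x,y)>0\}$ and $\le$ its reflexive-transitive closure; nodes $x,y$ are in conflict if there is a place $p\ne x,y$ and distinct transitions $t_1,t_2\in p^\bullet$ with $t_1\le x$, $t_2\le y$; concurrent if neither causally related nor in conflict. An occurrence net is a Petri net in which pre- and postconditions of transitions are sets, every place has at most one incoming transition, $\mathit{In}=\{p\mid{}^\bullet p=\emptyset\}$, $\mathcal F^{-1}$ is well-founded, and no transition is in conflict with itself. A cut is a maximal set of pairwise concurrent places. A homomorphism from $\mathcal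 N_1$ to $\mathcal N_2$ is a map $\lambda$ sending places to places and transitions to transitions with $\lambda[{}^\bullet t]={}^\bullet\lambda(t)$ and $\lambda[t^\bullet]=\lambda(t)^\bullet$; it is initial if $\lambda[\mathit{In}_1]=\mathit{In}_2$. An initial branching process of $\mathcal N$ is a pair $(\mathcal N^U,\lambda)$ with $\mathcal N^U$ an occurrence net and $\lambda$ an initial homomorphism $\mathcal N^U\to\mathcal N$ such that ${}^\bullet t_1={}^\bullet t_2$ and $\lambda(t_1)=\lambda(t_2)$ imply $t_1=t_2$. *)

theory Defs
  imports Main
begin

record 'n petri_net =
  places :: "'n set"
  trans  :: "'n set"
  flow   :: "'n \<Rightarrow> 'n \<Rightarrow> nat"
  init   :: "'n \<Rightarrow> nat"

definition preset :: "('n, 'z) petri_net_scheme \<Rightarrow> 'n \<Rightarrow> 'n set" where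
  "preset N x = {y. flow N y x > 0}"

definition postset :: "('n, 'z) petri_net_scheme \<Rightarrow> 'n \<Rightarrow> 'n set" where
  "postset N x = {y. flow N x y > 0}"

definition petri_net :: "('n, 'z) petri_net_scheme \<Rightarrow> bool" where
  "petri_net N \<longleftrightarrow>
     places N \<inter> trans N = {} \<and>
     (\<forall>x y. flow N x y > 0 \<longrightarrow>
        (x \<in> places N \<and> y \<in> trans N) \<or> (x \<in> trans N \<and> y \<in> places N)) \<and>
     finite {p. init N p > 0} \<and> (\<forall>p. init N p > 0 \<longrightarrow> p \<in> places N) \<and>
     (\<forall>t\<in>trans N. finite (preset N t) \<and> preset N t \<noteq> {} \<and>
                     finite (postset N t) \<and> postset N t \<noteq> {})"

definition enabled :: "('n, 'z) petri_net_scheme \<Rightarrow> ('n \<Rightarrow> nat) \<Rightarrow> 'n \<Rightarrow> bool" where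
  "enabled N M t \<longleftrightarrow> t \<in> trans N \<and> (\<forall>p. flow N p t \<le> M p)"

definition fire :: "('n, 'z) petri_net_scheme \<Rightarrow> ('n \<Rightarrow> nat) \<Rightarrow> 'n \<Rightarrow> ('n \<Rightarrow> nat)" where
  "fire N M t = (\<lambda>p. M p - flow N p t + flow N t p)"

inductive reachable :: "('n, 'z) petri_net_scheme \<Rightarrow> ('n \<Rightarrow> nat) \<Rightarrow> bool"
  for N where
  init_reach: "reachable N (init N)"
| fire_reach: "reachable N M \<Longrightarrow> enabled N M t \<Longrightarrow> reachable N (fire N M t)"

definition finite_net :: "('n, 'z) petri_net_scheme \<Rightarrow> bool" where
  "finite_net N \<longleftrightarrow> finite (places N) \<and> finite (trans N)"

definition k_bounded :: "('n, 'z) petri_net_scheme \<Rightarrow> nat \<Rightarrow> bool" where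
  "k_bounded N k \<longleftrightarrow> (\<forall>M p. reachable N M \<longrightarrow> p \<in> places N \<longrightarrow> M p \<le> k)"

definition flow_rel :: "('n, 'z) petri_net_scheme \<Rightarrow> ('n \<times> 'n) set" where
  "flow_rel N = {(x, y). flow N x y > 0}"

definition causal_lt :: "('n, 'z) petri_net_scheme \<Rightarrow> 'n \<Rightarrow> 'n \<Rightarrow> bool" where
  "causal_lt N x y \<longleftrightarrow> (x, y) \<in> (flow_rel N)\<^sup>+"

definition causal_le :: "('n, 'z) petri_net_scheme \<Rightarrow> 'n \<Rightarrow> 'n \<Rightarrow> bool" where
  "causal_le N x y \<longleftrightarrow> (x, y) \<in> (flow_rel N)\<^sup>*"

definition conflict :: "('n, 'z) petri_net_scheme \<Rightarrow> 'n \<Rightarrow> 'n \<Rightarrow> bool" where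
  "conflict N x y \<longleftrightarrow>
     (\<exists>p t1 t2. p \<in> places N \<and> p \<noteq> x \<and> p \<noteq> y \<and>
        t1 \<in> postset N p \<and> t2 \<in> postset N p \<and> t1 \<noteq> t2 \<and>
        causal_le N t1 x \<and> causal_le N t2 y)"

definition concurrent :: "('n, 'z) petri_net_scheme \<Rightarrow> 'n \<Rightarrow> 'n \<Rightarrow> bool" where
  "concurrent N x y \<longleftrightarrow>
     \<not> causal_lt N x y \<and> \<not> causal_lt N y x \<and> \<not> conflict N x y"

definition pairwise_concurrent_places :: "('n, 'z) petri_net_scheme \<Rightarrow> 'n set \<Rightarrow> bool" where
  "pairwise_concurrent_places N C \<longleftrightarrow>
     C \<subseteq> places N \<and> (\<forall>x\<in>C. \<forall>y\<in>C. x \<noteq> y \<longrightarrow> concurrent N x y)"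

definition is_cut :: "('n, 'z) petri_net_scheme \<Rightarrow> 'n set \<Rightarrow> bool" where
  "is_cut N C \<longleftrightarrow> pairwise_concurrent_places N C \<and>
     (\<forall>D. pairwise_concurrent_places N D \<longrightarrow> C \<subseteq> D \<longrightarrow> D = C)"

definition occurrence_net :: "('n, 'z) petri_net_scheme \<Rightarrow> bool" where
  "occurrence_net N \<longleftrightarrow>
     petri_net N \<and>
     (\<forall>x y. flow N x y \<le> 1) \<and>
     (\<forall>p\<in>places N. \<forall>t1 t2. t1 \<in> preset N p \<longrightarrow> t2 \<in> preset N p \<longrightarrow> t1 = t2) \<and>
     (\<forall>p. init N p = (if p \<in> places N \<and> preset N p = {} then 1 else 0)) \<and>
     wf (flow_rel N) \<and>
     (\<forall>t\<in>trans N. \<not> conflict N t t)"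

definition mset_image :: "('a \<Rightarrow> 'b) \<Rightarrow> ('a \<Rightarrow> nat) \<Rightarrow> ('b \<Rightarrow> nat)" where
  "mset_image f M = (\<lambda>y. \<Sum>x\<in>{x. f x = y \<and> M x > 0}. M x)"

definition homomorphism ::
  "('u, 'z1) petri_net_scheme \<Rightarrow> ('n, 'z2) petri_net_scheme \<Rightarrow> ('u \<Rightarrow> 'n) \<Rightarrow> bool" where
  "homomorphism N1 N2 h \<longleftrightarrow>
     (\<forall>p\<in>places N1. h p \<in> places N2) \<and>
     (\<forall>t\<in>trans N1. h t \<in> trans N2) \<and>
     (\<forall>t\<in>trans N1. mset_image h (\<lambda>p. flow N1 p t) = (\<lambda>q. flow N2 q (h t)) \<and>
                    mset_image h (\<lambda>p. flow N1 t p) = (\<lambda>q. flow N2 (h t) q))"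

definition initial_homomorphism ::
  "('u, 'z1) petri_net_scheme \<Rightarrow> ('n, 'z2) petri_net_scheme \<Rightarrow> ('u \<Rightarrow> 'n) \<Rightarrow> bool" where
  "initial_homomorphism N1 N2 h \<longleftrightarrow>
     homomorphism N1 N2 h \<and> mset_image h (init N1) = init N2"

definition branching_process ::
  "('n, 'z2) petri_net_scheme \<Rightarrow> ('u, 'z1) petri_net_scheme \<Rightarrow> ('u \<Rightarrow> 'n) \<Rightarrow> bool" where
  "branching_process N NU h \<longleftrightarrow>
     occurrence_net NU \<and> initial_homomorphism NU N h \<and>
     (\<forall>t1\<in>trans NU. \<forall>t2\<in>trans NU.
        preset NU t1 = preset NU t2 \<longrightarrow> h t1 = h t2 \<longrightarrow> t1 = t2)"

end

theory Submission
  imports Defs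
begin

locale bp =
  fixes N :: "'n petri_net" and NU :: "'u petri_net" and h :: "'u \<Rightarrow> 'n"
  assumes bp: "branching_process N NU h"
begin

lemma occ: "occurrence_net NU" using bp by (simp add: branching_process_def)
lemma pn: "petri_net NU" using occ by (simp add: occurrence_net_def)
lemma wfr: "wf (flow_rel NU)" using occ by (simp add: occurrence_net_def)
lemma disj: "places NU \<inter> trans NU = {}" using pn by (simp add: petri_net_def)
lemma flow_nodes: "flow NU x y > 0 \<Longrightarrow>
   (x \<in> places NU \<and> y \<in> trans NU) \<or> (x \<in> trans NU \<and> y \<in> places NU)"
  using pn by (simp add: petri_net_def)
lemma flow_le1: "flow NU x y \<le> 1" using occ by (simp add: occurrence_net_def)
lemma pre_unique: "p \<in> places NU \<Longrightarrow> t1 \<in> preset NU p \<Longrightarrow> t2 \<in> preset NU p \<Longrightarrow> t1 = t2"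
  using occ by (simp add: occurrence_net_def)
lemma init_NU: "init NU p = (if p \<in> places NU \<and> preset NU p = {} then 1 else 0)"
  using occ by (simp add: occurrence_net_def)
lemma no_self: "t \<in> trans NU \<Longrightarrow> \<not> conflict NU t t"
  using occ by (simp add: occurrence_net_def)
lemma hom: "homomorphism NU N h" using bp by (simp add: branching_process_def initial_homomorphism_def)
lemma hinit: "mset_image h (init NU) = init N" using bp by (simp add: branching_process_def initial_homomorphism_def)
lemma fin_init: "finite {p. init NU p > 0}" using pn by (simp add: petri_net_def)
lemma trans_fin: "t \<in> trans NU \<Longrightarrow> finite (preset NU t) \<and> finite (postset NU t)"
  using pn by (simp add: petri_net_def)

lemma pre_iff: "y \<in> preset NU x \<longleftrightarrow> flow NU y x > 0" by (simp add: preset_def)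
lemma post_iff: "y \<in> postset NU x \<longleftrightarrow> flow NU x y > 0" by (simp add: postset_def)
lemma rel_iff: "(x, y) \<in> flow_rel NU \<longleftrightarrow> flow NU x y > 0" by (simp add: flow_rel_def)

lemma acyc: "(x, x) \<notin> (flow_rel NU)\<^sup>+"
  using wf_acyclic[OF wfr] by (simp add: acyclic_def)

lemma pre_trans_place: "t \<in> trans NU \<Longrightarrow> p \<in> preset NU t \<Longrightarrow> p \<in> places NU"
  using flow_nodes disj pre_iff by blast
lemma post_trans_place: "t \<in> trans NU \<Longrightarrow> p \<in> postset NU t \<Longrightarrow> p \<in> places NU"
  using flow_nodes disj post_iff by blast
lemma pre_place_trans: "p \<in> places NU \<Longrightarrow> t \<in> preset NU p \<Longrightarrow> t \<in> trans NU"
  using flow_nodes disj pre_iff by blast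

lemma preset_finite: "finite (preset NU x)"
proof -
  consider "x \<in> trans NU" | "x \<in> places NU" | "x \<notin> trans NU" "x \<notin> places NU" by blast
  then show ?thesis
  proof cases
    case 1 then show ?thesis using trans_fin by blast
  next
    case 2
    show ?thesis
    proof (cases "preset NU x = {}")
      case False
      then obtain t where "t \<in> preset NU x" by blast
      then have "preset NU x \<subseteq> {t}" using pre_unique 2 by blast
      then show ?thesis using finite_subset by blast
    qed simp
  next
    case 3
    then have "preset NU x = {}" using flow_nodes pre_iff by blast
    then show ?thesis by simp
  qed
qed

lemma anc_finite: "finite {y. (y, x) \<in> (flow_rel NU)\<^sup>*}"
proof (induction x rule: wf_induct[OF wfr])
  case (1 x)
  have "{y. (y, x) \<in> (flow_rel NU)\<^sup>*} \<subseteq> insert x (\<Union>z\<in>preset NU x. {y. (y, z) \<in> (flow_rel NU)\<^sup>*})"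
  proof
    fix y assume "y \<in> {y. (y, x) \<in> (flow_rel NU)\<^sup>*}"
    then have "(y, x) \<in> (flow_rel NU)\<^sup>*" by simp
    then show "y \<in> insert x (\<Union>z\<in>preset NU x. {y. (y, z) \<in> (flow_rel NU)\<^sup>*})"
      by (cases rule: rtranclE) (auto simp: rel_iff pre_iff)
  qed
  moreover have "finite (insert x (\<Union>z\<in>preset NU x. {y. (y, z) \<in> (flow_rel NU)\<^sup>*}))"
    using 1 preset_finite by (auto simp: rel_iff pre_iff)
  ultimately show ?case using finite_subset by blast
qed

definition config :: "'u set \<Rightarrow> bool" where
  "config E \<longleftrightarrow> finite E \<and> E \<subseteq> trans NU \<and>
     (\<forall>t\<in>E. \<forall>p\<in>preset NU t. \<forall>t'\<in>preset NU p. t' \<in> E) \<and>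
     (\<forall>t1\<in>E. \<forall>t2\<in>E. \<forall>p. p \<in> preset NU t1 \<longrightarrow> p \<in> preset NU t2 \<longrightarrow> t1 = t2)"

definition cutE :: "'u set \<Rightarrow> 'u set" where
  "cutE E = {p \<in> places NU. (preset NU p = {} \<or> preset NU p \<inter> E \<noteq> {}) \<and> (\<forall>t\<in>E. p \<notin> preset NU t)}"

definition mark :: "'u set \<Rightarrow> 'n \<Rightarrow> nat" where
  "mark E = (\<lambda>q. card {p \<in> cutE E. h p = q})"

lemma cut_finite:
  assumes "config E" shows "finite (cutE E)"
proof -
  have "cutE E \<subseteq> {p. init NU p > 0} \<union> \<Union> (postset NU ` E)"
  proof
    fix p assume p: "p \<in> cutE E"
    show "p \<in> {p. init NU p > 0} \<union> \<Union> (postset NU ` E)"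
    proof (cases "preset NU p = {}")
      case True then show ?thesis using p init_NU[of p] by (simp add: cutE_def)
    next
      case False
      then obtain t where "t \<in> preset NU p" "t \<in> E" using p by (auto simp: cutE_def)
      then show ?thesis by (auto simp: pre_iff post_iff)
    qed
  qed
  moreover have "finite (\<Union> (postset NU ` E))"
    using assms trans_fin by (auto simp: config_def)
  ultimately show ?thesis using fin_init finite_subset by blast
qed

lemma count_pre:
  assumes "t \<in> trans NU" shows "flow N q (h t) = card {p \<in> preset NU t. h p = q}"
proof -
  have "mset_image h (\<lambda>p. flow NU p t) = (\<lambda>q. flow N q (h t))"
    using hom assms by (simp add: homomorphism_def)
  then have "flow N q (h t) = (\<Sum>x\<in>{x. h x = q \<and> flow NU x t > 0}. flow NU x t)"
    by (simp add: mset_image_def fun_eq_iff)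
  also have "\<dots> = (\<Sum>x\<in>{p \<in> preset NU t. h p = q}. 1)"
    apply (rule sum.cong)
    using flow_le1 by (auto simp: pre_iff intro: le_antisym)
  finally show ?thesis by simp
qed

lemma count_post:
  assumes "t \<in> trans NU" shows "flow N (h t) q = card {p \<in> postset NU t. h p = q}"
proof -
  have "mset_image h (\<lambda>p. flow NU t p) = (\<lambda>q. flow N (h t) q)"
    using hom assms by (simp add: homomorphism_def)
  then have "flow N (h t) q = (\<Sum>x\<in>{x. h x = q \<and> flow NU t x > 0}. flow NU t x)"
    by (simp add: mset_image_def fun_eq_iff)
  also have "\<dots> = (\<Sum>x\<in>{p \<in> postset NU t. h p = q}. 1)"
    apply (rule sum.cong)
    using flow_le1 by (auto simp: post_iff intro: le_antisym)
  finally show ?thesis by simp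
qed

lemma mark_empty: "mark {} = init N"
proof
  fix q
  have "init N q = (\<Sum>x\<in>{x. h x = q \<and> init NU x > 0}. init NU x)"
    using hinit by (simp add: mset_image_def fun_eq_iff)
  also have "\<dots> = (\<Sum>x\<in>{p \<in> cutE {}. h p = q}. 1)"
    apply (rule sum.cong)
    using init_NU by (auto simp: cutE_def split: if_splits)
  finally show "mark {} q = init N q" by (simp add: mark_def)
qed

lemma config_max:
  assumes c: "config E" and ne: "E \<noteq> {}"
  shows "\<exists>t\<in>E. \<forall>t'\<in>E. \<forall>p\<in>preset NU t'. t \<notin> preset NU p"
proof -
  define R where "R = {(t, t'). t \<in> E \<and> t' \<in> E \<and> (\<exists>p. t \<in> preset NU p \<and> p \<in> preset NU t')}"
  have fR: "finite R" using c unfolding config_def R_def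
    by (rule_tac finite_subset[of _ "E \<times> E"]) auto
  have sub: "R \<subseteq> (flow_rel NU)\<^sup>+"
  proof
    fix x assume "x \<in> R"
    then obtain a b p where "x = (a, b)" "(a, p) \<in> flow_rel NU" "(p, b) \<in> flow_rel NU"
      by (auto simp: R_def pre_iff rel_iff)
    then show "x \<in> (flow_rel NU)\<^sup>+" by auto
  qed
  have s1: "R\<^sup>+ \<subseteq> ((flow_rel NU)\<^sup>+)\<^sup>+" by (rule trancl_mono_subset[OF sub])
  have s2: "((flow_rel NU)\<^sup>+)\<^sup>+ = (flow_rel NU)\<^sup>+" by (rule trancl_id) (rule trans_trancl)
  have "R\<^sup>+ \<subseteq> (flow_rel NU)\<^sup>+" using s1 unfolding s2 .
  then have "acyclic R" using acyc unfolding acyclic_def by blast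
  then have "wf (R\<inverse>)" using finite_acyclic_wf_converse fR by blast
  then obtain z where z: "z \<in> E" "\<forall>y. (y, z) \<in> R\<inverse> \<longrightarrow> y \<notin> E"
    using ne wf_eq_minimal[of "R\<inverse>"] by blast
  show ?thesis
  proof (rule bexI[OF _ z(1)], intro ballI notI)
    fix t' p assume "t' \<in> E" "p \<in> preset NU t'" "z \<in> preset NU p"
    then have "(t', z) \<in> R\<inverse>" using z(1) unfolding R_def by blast
    then show False using z(2) \<open>t' \<in> E\<close> by blast
  qed
qed

lemma config_remove:
  assumes c: "config E" and t: "t \<in> E" and mx: "\<forall>t'\<in>E. \<forall>p\<in>preset NU t'. t \<notin> preset NU p"
  shows "config (E - {t})"
proof -
  have 1: "finite (E - {t}) \<and> E - {t} \<subseteq> trans NU" using c by (auto simp: config_def)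
  have 2: "\<forall>t1\<in>E - {t}. \<forall>p\<in>preset NU t1. \<forall>t'\<in>preset NU p. t' \<in> E - {t}"
  proof (intro ballI)
    fix t1 p t' assume a: "t1 \<in> E - {t}" "p \<in> preset NU t1" "t' \<in> preset NU p"
    then have "t' \<in> E" using c unfolding config_def by blast
    moreover have "t' \<noteq> t" using a mx by blast
    ultimately show "t' \<in> E - {t}" by simp
  qed
  have 3: "\<forall>t1\<in>E - {t}. \<forall>t2\<in>E - {t}. \<forall>p. p \<in> preset NU t1 \<longrightarrow> p \<in> preset NU t2 \<longrightarrow> t1 = t2"
    using c unfolding config_def by blast
  show ?thesis using 1 2 3 unfolding config_def by blast
qed

lemma step_pre:
  assumes c: "config E" and t: "t \<in> E"
  shows "preset NU t \<subseteq> cutE (E - {t})"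
proof
  fix p assume p: "p \<in> preset NU t"
  have tT: "t \<in> trans NU" using c t by (auto simp: config_def)
  have pP: "p \<in> places NU" using pre_trans_place[OF tT p] .
  have 1: "preset NU p = {} \<or> preset NU p \<inter> (E - {t}) \<noteq> {}"
  proof (cases "preset NU p = {}")
    case False
    then obtain t' where t': "t' \<in> preset NU p" by blast
    then have "t' \<in> E" using c t p by (auto simp: config_def)
    moreover have "t' \<noteq> t"
    proof
      assume "t' = t"
      then have "(t, p) \<in> flow_rel NU" "(p, t) \<in> flow_rel NU" using t' p by (auto simp: rel_iff pre_iff)
      then have "(t, t) \<in> (flow_rel NU)\<^sup>+" by auto
      then show False using acyc by blast
    qed
    ultimately show ?thesis using t' by blast
  qed simp
  have 2: "\<forall>t''\<in>E - {t}. p \<notin> preset NU t''" using c t p by (auto simp: config_def)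
  show "p \<in> cutE (E - {t})" using pP 1 2 by (simp add: cutE_def)
qed

lemma step_post:
  assumes c: "config E" and t: "t \<in> E"
  shows "postset NU t \<inter> cutE (E - {t}) = {}"
proof -
  have tT: "t \<in> trans NU" using c t by (auto simp: config_def)
  { fix p assume p: "p \<in> postset NU t" and pc: "p \<in> cutE (E - {t})"
    have pP: "p \<in> places NU" using post_trans_place[OF tT p] .
    have tp: "t \<in> preset NU p" using p by (simp add: pre_iff post_iff)
    then have "preset NU p = {t}" using pre_unique[OF pP] by blast
    then have False using pc by (auto simp: cutE_def) }
  then show ?thesis by blast
qed

lemma step_eq:
  assumes c: "config E" and t: "t \<in> E" and mx: "\<forall>t'\<in>E. \<forall>p\<in>preset NU t'. t \<notin> preset NU p"
  shows "cutE E = (cutE (E - {t}) - preset NU t) \<union> postset NU t"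
proof
  have tT: "t \<in> trans NU" using c t by (auto simp: config_def)
  show "cutE E \<subseteq> (cutE (E - {t}) - preset NU t) \<union> postset NU t"
  proof
    fix p assume p: "p \<in> cutE E"
    show "p \<in> (cutE (E - {t}) - preset NU t) \<union> postset NU t"
    proof (cases "t \<in> preset NU p")
      case True then show ?thesis by (simp add: pre_iff post_iff)
    next
      case False
      then have "preset NU p = {} \<or> preset NU p \<inter> (E - {t}) \<noteq> {}" using p by (auto simp: cutE_def)
      then show ?thesis using p t by (auto simp: cutE_def)
    qed
  qed
  show "(cutE (E - {t}) - preset NU t) \<union> postset NU t \<subseteq> cutE E"
  proof
    fix p assume p: "p \<in> (cutE (E - {t}) - preset NU t) \<union> postset NU t"
    show "p \<in> cutE E"
    proof (cases "p \<in> postset NU t")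
      case True
      have pP: "p \<in> places NU" using post_trans_place[OF tT True] .
      have tp: "t \<in> preset NU p" using True by (simp add: pre_iff post_iff)
      have "\<forall>t'\<in>E. p \<notin> preset NU t'"
      proof (intro ballI notI)
        fix t' assume t': "t' \<in> E" "p \<in> preset NU t'"
        show False
        proof (cases "t' = t")
          case True
          then have "(t, p) \<in> flow_rel NU" "(p, t) \<in> flow_rel NU" using t' tp by (auto simp: rel_iff pre_iff)
          then have "(t, t) \<in> (flow_rel NU)\<^sup>+" by auto
          then show False using acyc by blast
        next
          case False then show False using mx t' tp by blast
        qed
      qed
      then show ?thesis using pP tp t by (auto simp: cutE_def)
    next
      case False
      then have "p \<in> cutE (E - {t})" "p \<notin> preset NU t" using p by auto
      then show ?thesis by (auto simp: cutE_def)
    qed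
  qed
qed

lemma card_step:
  assumes fB: "finite B" and S: "S \<subseteq> B" and T: "T \<inter> B = {}" and fT: "finite T"
  shows "card {p \<in> (B - S) \<union> T. h p = q} = card {p \<in> B. h p = q} - card {p \<in> S. h p = q} + card {p \<in> T. h p = q}"
proof -
  have "{p \<in> (B - S) \<union> T. h p = q} = ({p \<in> B. h p = q} - {p \<in> S. h p = q}) \<union> {p \<in> T. h p = q}" by auto
  moreover have "card (({p \<in> B. h p = q} - {p \<in> S. h p = q}) \<union> {p \<in> T. h p = q})
     = card ({p \<in> B. h p = q} - {p \<in> S. h p = q}) + card {p \<in> T. h p = q}"
    by (rule card_Un_disjoint) (use fB fT T in auto)
  moreover have "card ({p \<in> B. h p = q} - {p \<in> S. h p = q}) = card {p \<in> B. h p = q} - card {p \<in> S. h p = q}"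
  proof (rule card_Diff_subset)
    show "finite {p \<in> S. h p = q}" using fB S by (metis (no_types, lifting) finite_subset mem_Collect_eq subsetI subset_iff)
    show "{p \<in> S. h p = q} \<subseteq> {p \<in> B. h p = q}" using S by auto
  qed
  ultimately show ?thesis by simp
qed

lemma mark_reach: "config E \<Longrightarrow> reachable N (mark E)"
proof (induction "card E" arbitrary: E)
  case 0
  then have "E = {}" by (simp add: config_def)
  then show ?case using mark_empty reachable.init_reach by simp
next
  case (Suc n)
  then have ne: "E \<noteq> {}" by auto
  obtain t where t: "t \<in> E" and mx: "\<forall>t'\<in>E. \<forall>p\<in>preset NU t'. t \<notin> preset NU p"
    using config_max[OF Suc.prems ne] by blast
  have c': "config (E - {t})" using config_remove[OF Suc.prems t mx] .
  have "card (E - {t}) = n" using Suc.hyps(2) t by simp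
  then have r: "reachable N (mark (E - {t}))" using Suc.hyps(1) c' by blast
  have tT: "t \<in> trans NU" using Suc.prems t by (auto simp: config_def)
  have fB: "finite (cutE (E - {t}))" using cut_finite[OF c'] .
  have pre: "preset NU t \<subseteq> cutE (E - {t})" using step_pre[OF Suc.prems t] .
  have post: "postset NU t \<inter> cutE (E - {t}) = {}" using step_post[OF Suc.prems t] .
  have hT: "h t \<in> trans N" using hom tT by (simp add: homomorphism_def)
  have en: "enabled N (mark (E - {t})) (h t)"
    unfolding enabled_def mark_def
  proof (intro conjI allI hT)
    fix q
    show "flow N q (h t) \<le> card {p \<in> cutE (E - {t}). h p = q}"
      unfolding count_pre[OF tT] using pre fB by (intro card_mono) auto
  qed
  have "mark E = fire N (mark (E - {t})) (h t)"
  proof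
    fix q
    show "mark E q = fire N (mark (E - {t})) (h t) q"
    proof -
      have T: "postset NU t \<inter> cutE (E - {t}) = {}" using post .
      have fT: "finite (postset NU t)" using trans_fin[OF tT] by blast
      have "mark E q = card {p \<in> (cutE (E - {t}) - preset NU t) \<union> postset NU t. h p = q}"
        unfolding mark_def using step_eq[OF Suc.prems t mx] by simp
      also have "\<dots> = card {p \<in> cutE (E - {t}). h p = q} - card {p \<in> preset NU t. h p = q} + card {p \<in> postset NU t. h p = q}"
        by (rule card_step[OF fB pre T fT])
      also have "\<dots> = fire N (mark (E - {t})) (h t) q"
        unfolding fire_def mark_def count_pre[OF tT] count_post[OF tT] by simp
      finally show ?thesis .
    qed
  qed
  then show ?case using reachable.fire_reach[OF r en] by simp
qed

lemma conflictI: "p \<in> places NU \<Longrightarrow> p \<noteq> x \<Longrightarrow> p \<noteq> y \<Longrightarrow> t1 \<in> postset NU p \<Longrightarrow>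
   t2 \<in> postset NU p \<Longrightarrow> t1 \<noteq> t2 \<Longrightarrow> causal_le NU t1 x \<Longrightarrow> causal_le NU t2 y \<Longrightarrow> conflict NU x y"
  unfolding conflict_def by (intro exI[of _ p] exI[of _ t1] exI[of _ t2]) simp

lemma rt_into: "(a, b) \<in> flow_rel NU \<Longrightarrow> (b, c) \<in> (flow_rel NU)\<^sup>* \<Longrightarrow> (a, c) \<in> (flow_rel NU)\<^sup>+"
  by (rule rtrancl_into_trancl2)

lemma last_step:
  assumes "(t, x) \<in> (flow_rel NU)\<^sup>*" "t \<noteq> x"
  shows "\<exists>z. (t, z) \<in> (flow_rel NU)\<^sup>* \<and> z \<in> preset NU x"
  using assms by (cases rule: rtranclE) (auto simp: rel_iff pre_iff)

lemma coset_config: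
  assumes pc: "pairwise_concurrent_places NU X" and fX: "finite X"
  defines "E \<equiv> {t \<in> trans NU. \<exists>x\<in>X. causal_le NU t x}"
  shows "config E \<and> X \<subseteq> cutE E"
proof -
  have XP: "X \<subseteq> places NU" using pc by (simp add: pairwise_concurrent_places_def)
  have conc: "\<And>x y. x \<in> X \<Longrightarrow> y \<in> X \<Longrightarrow> x \<noteq> y \<Longrightarrow> concurrent NU x y"
    using pc by (simp add: pairwise_concurrent_places_def)
  have fE: "finite E"
  proof (rule finite_subset)
    show "E \<subseteq> (\<Union>x\<in>X. {y. (y, x) \<in> (flow_rel NU)\<^sup>*})" by (auto simp: E_def causal_le_def)
    show "finite (\<Union>x\<in>X. {y. (y, x) \<in> (flow_rel NU)\<^sup>*})" using fX anc_finite by blast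
  qed
  have cl: "\<forall>t\<in>E. \<forall>p\<in>preset NU t. \<forall>t'\<in>preset NU p. t' \<in> E"
  proof (intro ballI)
    fix t p t' assume a: "t \<in> E" "p \<in> preset NU t" "t' \<in> preset NU p"
    then obtain x where x: "x \<in> X" "(t, x) \<in> (flow_rel NU)\<^sup>*" and tT: "t \<in> trans NU"
      by (auto simp: E_def causal_le_def)
    have "(p, x) \<in> (flow_rel NU)\<^sup>*" using a(2) x(2) by (auto simp: pre_iff rel_iff intro: converse_rtrancl_into_rtrancl)
    then have "(t', x) \<in> (flow_rel NU)\<^sup>*" using a(3) by (auto simp: pre_iff rel_iff intro: converse_rtrancl_into_rtrancl)
    moreover have "t' \<in> trans NU" using pre_place_trans[OF pre_trans_place[OF tT a(2)] a(3)] .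
    ultimately show "t' \<in> E" using x(1) by (auto simp: E_def causal_le_def)
  qed
  have nc: "\<forall>t1\<in>E. \<forall>t2\<in>E. \<forall>p. p \<in> preset NU t1 \<longrightarrow> p \<in> preset NU t2 \<longrightarrow> t1 = t2"
  proof (intro ballI allI impI; rule ccontr)
    fix t1 t2 p assume a: "t1 \<in> E" "t2 \<in> E" "p \<in> preset NU t1" "p \<in> preset NU t2" "t1 \<noteq> t2"
    obtain x1 where x1: "x1 \<in> X" "(t1, x1) \<in> (flow_rel NU)\<^sup>*" and t1T: "t1 \<in> trans NU"
      using a(1) by (auto simp: E_def causal_le_def)
    obtain x2 where x2: "x2 \<in> X" "(t2, x2) \<in> (flow_rel NU)\<^sup>*" and t2T: "t2 \<in> trans NU"
      using a(2) by (auto simp: E_def causal_le_def)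
    have pP: "p \<in> places NU" using pre_trans_place[OF t1T a(3)] .
    have px1: "(p, x1) \<in> (flow_rel NU)\<^sup>+" using rt_into[OF _ x1(2)] a(3) by (simp add: pre_iff rel_iff)
    have px2: "(p, x2) \<in> (flow_rel NU)\<^sup>+" using rt_into[OF _ x2(2)] a(4) by (simp add: pre_iff rel_iff)
    have ne1: "p \<noteq> x1" using px1 acyc by blast
    have ne2: "p \<noteq> x2" using px2 acyc by blast
    have post: "t1 \<in> postset NU p" "t2 \<in> postset NU p" using a(3,4) by (simp_all add: pre_iff post_iff)
    show False
    proof (cases "x1 = x2")
      case False
      have "conflict NU x1 x2"
      proof -
        have c1: "causal_le NU t1 x1" using x1(2) by (simp add: causal_le_def)
        have c2: "causal_le NU t2 x2" using x2(2) by (simp add: causal_le_def)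
        show ?thesis by (rule conflictI[OF pP ne1 ne2 post a(5) c1 c2])
      qed
      then show False using conc[OF x1(1) x2(1) False] by (simp add: concurrent_def)
    next
      case True
      have x1P: "x1 \<in> places NU" using XP x1(1) by blast
      have "t1 \<noteq> x1" using t1T x1P disj by blast
      then obtain z1 where z1: "(t1, z1) \<in> (flow_rel NU)\<^sup>*" "z1 \<in> preset NU x1" using last_step x1(2) by blast
      have "t2 \<noteq> x1" using t2T x1P disj by blast
      then obtain z2 where z2: "(t2, z2) \<in> (flow_rel NU)\<^sup>*" "z2 \<in> preset NU x1" using last_step x2(2) True by blast
      have "z1 = z2" using pre_unique[OF x1P z1(2) z2(2)] .
      have zT: "z1 \<in> trans NU" using pre_place_trans[OF x1P z1(2)] .
      have "p \<noteq> z1" using zT pP disj by blast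
      then have "conflict NU z1 z1"
      proof -
        have c1: "causal_le NU t1 z1" using z1(1) by (simp add: causal_le_def)
        have c2: "causal_le NU t2 z1" using z2(1) \<open>z1 = z2\<close> by (simp add: causal_le_def)
        show ?thesis by (rule conflictI[OF pP \<open>p \<noteq> z1\<close> \<open>p \<noteq> z1\<close> post a(5) c1 c2])
      qed
      then show False using no_self[OF zT] by blast
    qed
  qed
  have ET: "E \<subseteq> trans NU" unfolding E_def by blast
  have cfg: "config E" unfolding config_def using fE ET cl nc by blast
  have "X \<subseteq> cutE E"
  proof
    fix x assume x: "x \<in> X"
    have xP: "x \<in> places NU" using XP x by blast
    have 1: "preset NU x = {} \<or> preset NU x \<inter> E \<noteq> {}"
    proof (cases "preset NU x = {}")
      case False
      then obtain t0 where t0: "t0 \<in> preset NU x" by blast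
      have "t0 \<in> trans NU" using pre_place_trans[OF xP t0] .
      moreover have "(t0, x) \<in> (flow_rel NU)\<^sup>*" using t0 by (auto simp: pre_iff rel_iff)
      ultimately have "t0 \<in> E" using x by (auto simp: E_def causal_le_def)
      then show ?thesis using t0 by blast
    qed simp
    have 2: "\<forall>t\<in>E. x \<notin> preset NU t"
    proof (intro ballI notI)
      fix t assume t: "t \<in> E" "x \<in> preset NU t"
      then obtain x' where x': "x' \<in> X" "(t, x') \<in> (flow_rel NU)\<^sup>*" by (auto simp: E_def causal_le_def)
      have xx: "(x, x') \<in> (flow_rel NU)\<^sup>+" using rt_into[OF _ x'(2)] t(2) by (simp add: pre_iff rel_iff)
      show False
      proof (cases "x = x'")
        case True then show False using xx acyc by blast
      next
        case False
        then show False using conc[OF x x'(1) False] xx by (simp add: concurrent_def causal_lt_def)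
      qed
    qed
    show "x \<in> cutE E" using xP 1 2 by (simp add: cutE_def)
  qed
  then show ?thesis using cfg by blast
qed

lemma coset_bound:
  assumes pc: "pairwise_concurrent_places NU X" and fX: "finite X"
    and kb: "k_bounded N k" and fP: "finite (places N)"
  shows "card X \<le> k * card (places N)"
proof -
  define E where "E = {t \<in> trans NU. \<exists>x\<in>X. causal_le NU t x}"
  have cE: "config E" and XC: "X \<subseteq> cutE E" using coset_config[OF pc fX] unfolding E_def by blast+
  have r: "reachable N (mark E)" using mark_reach[OF cE] .
  have fC: "finite (cutE E)" using cut_finite[OF cE] .
  have XP: "X \<subseteq> places NU" using pc by (simp add: pairwise_concurrent_places_def)
  have img: "h ` X \<subseteq> places N" using XP hom by (auto simp: homomorphism_def)
  have "card X = (\<Sum>x\<in>X. 1)" by simp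
  also have "\<dots> = (\<Sum>q\<in>places N. \<Sum>x\<in>{x \<in> X. h x = q}. 1)"
    by (rule sum.group[symmetric, OF fX fP img])
  also have "\<dots> = (\<Sum>q\<in>places N. card {x \<in> X. h x = q})" by simp
  also have "\<dots> \<le> (\<Sum>q\<in>places N. k)"
  proof (rule sum_mono)
    fix q assume q: "q \<in> places N"
    have "card {x \<in> X. h x = q} \<le> card {p \<in> cutE E. h p = q}"
      by (rule card_mono) (use fC XC in auto)
    also have "\<dots> = mark E q" by (simp add: mark_def)
    also have "\<dots> \<le> k" using kb r q by (simp add: k_bounded_def)
    finally show "card {x \<in> X. h x = q} \<le> k" .
  qed
  also have "\<dots> = k * card (places N)" by simp
  finally show ?thesis .
qed

end

theorem mainTheorem13:
  fixes N :: "'n petri_net" and NU :: "'u petri_net" and h :: "'u \<Rightarrow> 'n" and k :: nat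
  assumes "petri_net N" and "finite_net N" and "k \<ge> 1" and "k_bounded N k"
    and "branching_process N NU h"
    and "is_cut NU C"
  shows "finite C"
proof (rule ccontr)
  assume inf: "infinite C"
  interpret bp N NU h using assms(5) by unfold_locales
  obtain X where X: "finite X" "card X = k * card (places N) + 1" "X \<subseteq> C"
    using infinite_arbitrarily_large[OF inf] by blast
  have "pairwise_concurrent_places NU C" using assms(6) by (simp add: is_cut_def)
  then have "pairwise_concurrent_places NU X" using X(3) by (auto simp: pairwise_concurrent_places_def)
  then have "card X \<le> k * card (places N)"
    using coset_bound X(1) assms(4) assms(2) by (simp add: finite_net_def)
  then show False using X(2) by simp
qed

end
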